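(* Let $X$ be a real Banach space and $h:X\times X^*\to\mathbb{R}\cup\{\pm\infty\}$ a convex function with $h(x,x^* )\geq\langle x,x^*\rangle$ for all $(x,x^* )\in X\times X^*$. Then $$P_2(D(h))\subseteq\mathrm{cl}_{w*}P_1(D(h^* )),\qquad P_1(D(h))\subseteq\mathrm{cl}_{w*}P_2(D(h^* )),$$ where the first closure is the weak-$*$ closure in $X^*$ and the second is the weak-$*$ closure in $X^{**}$.
   Context: $X$ is identified with its canonical image in $X^{**}$. $P_1,P_2$ are the canonical projections of a Cartesian product onto its factors; $D(f)=\{z\;|\;f(z)<\infty\}$. The conjugate of $h$ is $h^*:X^*\times X^{**}\to\mathbb{R}\cup\{\pm\infty\}$, $h^*(x^*,x^{**})=\sup_{(y,y^* )\in X\times X^*}\langle y,x^*\rangle+\langle x^{**},y^*\rangle-h(y,y^* )$. *)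

theory Defs
  imports "HOL-Analysis.Analysis"
begin

text \<open>Dual space of X: bounded linear functionals X \<Rightarrow>L real. Bidual: (X \<Rightarrow>L real) \<Rightarrow>L real.\<close>

definition canon :: "'a::real_normed_vector \<Rightarrow> (('a \<Rightarrow>\<^sub>L real) \<Rightarrow>\<^sub>L real)" where
  "canon x = Blinfun (\<lambda>f. blinfun_apply f x)"

text \<open>Weak-star topology on the dual of V: the initial topology of the evaluations at points of V,
  i.e. the pullback of the product topology on V \<Rightarrow> real.\<close>
definition weak_star :: "('b::real_normed_vector \<Rightarrow>\<^sub>L real) topology" where
  "weak_star = pullback_topology UNIV blinfun_apply (product_topology (\<lambda>_. euclideanreal) UNIV)"

definition convex_efun :: "('v::real_vector \<Rightarrow> ereal) \<Rightarrow> bool" where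
  "convex_efun f \<longleftrightarrow> convex {(z, t::real). f z \<le> ereal t}"

definition edom :: "('v \<Rightarrow> ereal) \<Rightarrow> 'v set" where
  "edom f = {z. f z < \<infinity>}"

definition conj_fitz ::
  "('a::real_normed_vector \<times> ('a \<Rightarrow>\<^sub>L real) \<Rightarrow> ereal)
   \<Rightarrow> ('a \<Rightarrow>\<^sub>L real) \<times> (('a \<Rightarrow>\<^sub>L real) \<Rightarrow>\<^sub>L real) \<Rightarrow> ereal" where
  "conj_fitz h = (\<lambda>(xs, xss). SUP p \<in> UNIV.
      ereal (blinfun_apply xs (fst p) + blinfun_apply xss (snd p)) - h p)"

end

theory Submission
  imports Defs
begin


definition sublin :: "('v::real_vector \<Rightarrow> real) \<Rightarrow> bool" where
  "sublin q \<longleftrightarrow> (\<forall>x y. q (x + y) \<le> q x + q y) \<and> (\<forall>c x. c > 0 \<longrightarrow> q (c *\<^sub>R x) \<le> c * q x)"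

definition epi_of :: "('v \<Rightarrow> real) \<Rightarrow> ('v \<times> real) set" where
  "epi_of q = {(x, t). q x \<le> t}"

lemma epi_of_subset: "epi_of q1 \<subseteq> epi_of q2 \<longleftrightarrow> (\<forall>x. q2 x \<le> q1 x)"
  unfolding epi_of_def by (auto intro: order_trans)

lemma sublin_zero:
  assumes "sublin q" "\<forall>x. q x \<le> p x" "p 0 = 0"
  shows "q 0 = 0"
proof -
  have "q (0 + 0) \<le> q 0 + q 0" using assms(1) unfolding sublin_def by blast
  then have "q 0 \<ge> 0" by simp
  moreover have "q 0 \<le> 0" using assms(2,3) by metis
  ultimately show ?thesis by simp
qed

lemma sublin_neg:
  assumes "sublin q" "q 0 = 0"
  shows "- q (- x) \<le> q x"
proof -
  have "q (x + - x) \<le> q x + q (- x)" using assms(1) unfolding sublin_def by blast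
  then show ?thesis using assms(2) by simp
qed

lemma minimal_sublin_linear:
  fixes q :: "'v::real_vector \<Rightarrow> real"
  assumes sq: "sublin q" and q0: "q 0 = 0"
    and minq: "\<And>r. sublin r \<Longrightarrow> (\<forall>x. r x \<le> q x) \<Longrightarrow> r = q"
  shows "linear q"
proof -
  have sub: "q (x + y) \<le> q x + q y" for x y using sq unfolding sublin_def by blast
  have hom: "c > 0 \<Longrightarrow> q (c *\<^sub>R x) \<le> c * q x" for c x using sq unfolding sublin_def by blast
  have homeq: "q (c *\<^sub>R x) = c * q x" if "c > 0" for c x
  proof -
    have "q (inverse c *\<^sub>R (c *\<^sub>R x)) \<le> inverse c * q (c *\<^sub>R x)" using hom[of "inverse c" "c *\<^sub>R x"] that by simp
    then have "q x \<le> inverse c * q (c *\<^sub>R x)" using that by simp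
    then have "c * q x \<le> q (c *\<^sub>R x)" using that by (simp add: field_simps)
    then show ?thesis using hom[OF that, of x] by simp
  qed
  have homeq0: "q (c *\<^sub>R x) = c * q x" if "c \<ge> 0" for c x
    using homeq[of c x] that q0 by (cases "c = 0") auto
  have negle: "- q (- x) \<le> q x" for x using sublin_neg[OF sq q0] .
  have neg: "q (- a) = - q a" for a
  proof -
    define r where "r x = (INF t\<in>{0..}. q (x + t *\<^sub>R a) - t * q a)" for x
    have lb: "- q (- x) \<le> q (x + t *\<^sub>R a) - t * q a" if "t \<ge> 0" for x t
    proof -
      have "q (t *\<^sub>R a) \<le> q (x + t *\<^sub>R a) + q (- x)"
        using sub[of "x + t *\<^sub>R a" "- x"] by simp
      then show ?thesis using homeq0[OF that] by simp
    qed
    have bdd: "bdd_below ((\<lambda>t. q (x + t *\<^sub>R a) - t * q a) ` {0..})" for x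
      using lb by (auto intro!: bdd_belowI2[where m="- q (- x)"])
    have rle: "r x \<le> q (x + t *\<^sub>R a) - t * q a" if "t \<ge> 0" for x t
      unfolding r_def using that bdd by (intro cINF_lower) auto
    have rq: "r x \<le> q x" for x using rle[of 0 x] by simp
    have rge: "c \<le> r x" if "\<And>t. t \<ge> 0 \<Longrightarrow> c \<le> q (x + t *\<^sub>R a) - t * q a" for c x
      unfolding r_def using that by (intro cINF_greatest) auto
    have "sublin r"
      unfolding sublin_def
    proof (intro conjI allI impI)
      fix x y
      have "r (x + y) - (q (y + t2 *\<^sub>R a) - t2 * q a) \<le> r x" if t2: "t2 \<ge> 0" for t2
      proof (rule rge)
        fix t1 :: real assume t1: "t1 \<ge> 0"
        have "r (x + y) \<le> q ((x + y) + (t1 + t2) *\<^sub>R a) - (t1 + t2) * q a"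
          using rle t1 t2 by simp
        also have "q ((x + y) + (t1 + t2) *\<^sub>R a) \<le> q (x + t1 *\<^sub>R a) + q (y + t2 *\<^sub>R a)"
          using sub[of "x + t1 *\<^sub>R a" "y + t2 *\<^sub>R a"] by (simp add: algebra_simps)
        finally show "r (x + y) - (q (y + t2 *\<^sub>R a) - t2 * q a) \<le> q (x + t1 *\<^sub>R a) - t1 * q a"
          by (simp add: algebra_simps)
      qed
      then have "r (x + y) - r x \<le> r y" by (intro rge) (auto simp: algebra_simps)
      then show "r (x + y) \<le> r x + r y" by simp
    next
      fix c :: real and x assume c: "c > 0"
      have "r (c *\<^sub>R x) / c \<le> r x"
      proof (rule rge)
        fix t :: real assume t: "t \<ge> 0"
        have "r (c *\<^sub>R x) \<le> q (c *\<^sub>R x + (c * t) *\<^sub>R a) - (c * t) * q a"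
          using rle c t by simp
        also have "q (c *\<^sub>R x + (c * t) *\<^sub>R a) = c * q (x + t *\<^sub>R a)"
          using homeq[OF c, of "x + t *\<^sub>R a"] by (simp add: algebra_simps)
        finally show "r (c *\<^sub>R x) / c \<le> q (x + t *\<^sub>R a) - t * q a"
          using c by (simp add: field_simps)
      qed
      then show "r (c *\<^sub>R x) \<le> c * r x" using c by (simp add: field_simps)
    qed
    then have "r = q" using minq rq by blast
    then have "q (- a) \<le> q (- a + 1 *\<^sub>R a) - 1 * q a" using rle[of 1 "- a"] by simp
    then have "q (- a) \<le> - q a" using q0 by simp
    then show ?thesis using negle[of a] by simp
  qed
  show "linear q"
  proof (rule linearI)
    fix x y
    have "q (- x + - y) \<le> q (- x) + q (- y)" by (rule sub)
    then have "- q (x + y) \<le> - q x - q y" using neg[of "x + y"] neg[of x] neg[of y]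
      by (simp add: algebra_simps)
    then show "q (x + y) = q x + q y" using sub[of x y] by simp
  next
    fix c :: real and x
    show "q (c *\<^sub>R x) = c *\<^sub>R q x"
    proof (cases "c \<ge> 0")
      case True then show ?thesis using homeq0 by simp
    next
      case False
      then have "q ((- c) *\<^sub>R x) = (- c) * q x" using homeq0[of "- c" x] by simp
      then have "q (- (c *\<^sub>R x)) = - (c * q x)" by simp
      then show ?thesis using neg[of "c *\<^sub>R x"] by simp
    qed
  qed
qed

lemma sublin_0: assumes "sublin q" shows "q 0 = 0"
proof -
  have "q (0 + 0) \<le> q 0 + q 0" using assms unfolding sublin_def by blast
  moreover have "q ((1/2::real) *\<^sub>R 0) \<le> (1/2) * q 0" using assms unfolding sublin_def by (metis divide_pos_pos zero_less_numeral zero_less_one)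
  ultimately show ?thesis by simp
qed

theorem hahn_banach:
  fixes p :: "'v::real_vector \<Rightarrow> real"
  assumes sp: "sublin p"
  shows "\<exists>f. linear f \<and> (\<forall>x. f x \<le> p x)"
proof -
  define S where "S = {q. sublin q \<and> (\<forall>x. q x \<le> p x)}"
  define A where "A = epi_of ` S"
  have pS: "p \<in> S" using sp unfolding S_def by auto
  have "\<forall>C\<in>chains A. \<exists>U\<in>A. \<forall>X\<in>C. X \<subseteq> U"
  proof
    fix C assume C: "C \<in> chains A"
    show "\<exists>U\<in>A. \<forall>X\<in>C. X \<subseteq> U"
    proof (cases "C = {}")
      case True then show ?thesis using pS unfolding A_def by auto
    next
      case False
      define Q where "Q = {q\<in>S. epi_of q \<in> C}"
      have CQ: "C = epi_of ` Q" using C unfolding Q_def A_def chains_def by auto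
      then have Qne: "Q \<noteq> {}" using False by auto
      have comp: "(\<forall>x. q1 x \<le> q2 x) \<or> (\<forall>x. q2 x \<le> q1 x)" if "q1 \<in> Q" "q2 \<in> Q" for q1 q2
      proof -
        have "epi_of q1 \<subseteq> epi_of q2 \<or> epi_of q2 \<subseteq> epi_of q1"
          using C that unfolding Q_def chains_def chain_subset_def by auto
        then show ?thesis unfolding epi_of_subset by blast
      qed
      have Qsub: "sublin q" "\<forall>x. q x \<le> p x" if "q \<in> Q" for q using that unfolding Q_def S_def by auto
      define g where "g x = (INF q\<in>Q. q x)" for x
      have lb: "- p (- x) \<le> q x" if "q \<in> Q" for q x
        using sublin_neg[OF Qsub(1)[OF that] sublin_0[OF Qsub(1)[OF that]], of x] Qsub(2)[OF that, rule_format, of "- x"]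
        by simp
      have bdd: "bdd_below ((\<lambda>q. q x) ` Q)" for x using lb by (auto intro!: bdd_belowI2[where m="- p (- x)"])
      have gle: "g x \<le> q x" if "q \<in> Q" for q x unfolding g_def using bdd that by (intro cINF_lower)
      have gge: "c \<le> g x" if "\<And>q. q \<in> Q \<Longrightarrow> c \<le> q x" for c x unfolding g_def using that Qne by (intro cINF_greatest) auto
      have "sublin g"
        unfolding sublin_def
      proof (intro conjI allI impI)
        fix x y
        have "g (x + y) \<le> q1 x + q2 y" if "q1 \<in> Q" "q2 \<in> Q" for q1 q2
        proof (cases "\<forall>x. q1 x \<le> q2 x")
          case True
          have "g (x + y) \<le> q1 (x + y)" using gle that by blast
          also have "\<dots> \<le> q1 x + q1 y" using Qsub(1)[OF that(1)] unfolding sublin_def by blast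
          also have "\<dots> \<le> q1 x + q2 y" using True by (simp add: add_left_mono)
          finally show ?thesis .
        next
          case False
          then have c: "\<forall>x. q2 x \<le> q1 x" using comp that by blast
          have "g (x + y) \<le> q2 (x + y)" using gle that by blast
          also have "\<dots> \<le> q2 x + q2 y" using Qsub(1)[OF that(2)] unfolding sublin_def by blast
          also have "\<dots> \<le> q1 x + q2 y" using c by (simp add: add_right_mono)
          finally show ?thesis .
        qed
        then have "g (x + y) - q2 y \<le> g x" if "q2 \<in> Q" for q2 using that by (intro gge) (auto simp: algebra_simps)
        then have "g (x + y) - g x \<le> g y" by (intro gge) (auto simp: algebra_simps)
        then show "g (x + y) \<le> g x + g y" by simp
      next
        fix c :: real and x assume c: "c > 0"
        have "g (c *\<^sub>R x) / c \<le> g x"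
        proof (rule gge)
          fix q assume q: "q \<in> Q"
          have "g (c *\<^sub>R x) \<le> q (c *\<^sub>R x)" using gle q by blast
          also have "\<dots> \<le> c * q x" using Qsub(1)[OF q] c unfolding sublin_def by blast
          finally show "g (c *\<^sub>R x) / c \<le> q x" using c by (simp add: field_simps)
        qed
        then show "g (c *\<^sub>R x) \<le> c * g x" using c by (simp add: field_simps)
      qed
      moreover have "\<forall>x. g x \<le> p x"
      proof
        fix x
        obtain q where "q \<in> Q" using Qne by blast
        then show "g x \<le> p x" using gle Qsub(2) order_trans by blast
      qed
      ultimately have "g \<in> S" unfolding S_def by auto
      moreover have "\<forall>X\<in>C. X \<subseteq> epi_of g"
      proof
        fix X assume "X \<in> C"
        then obtain q where "q \<in> Q" "X = epi_of q" using CQ by blast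
        then show "X \<subseteq> epi_of g" by (simp add: epi_of_subset gle)
      qed
      ultimately show ?thesis unfolding A_def by blast
    qed
  qed
  from Zorn_Lemma2[OF this] obtain M where M: "M \<in> A" "\<forall>X\<in>A. M \<subseteq> X \<longrightarrow> X = M" by blast
  then obtain q where q: "q \<in> S" "M = epi_of q" unfolding A_def by auto
  have "linear q"
  proof (rule minimal_sublin_linear)
    show "sublin q" using q unfolding S_def by auto
    then show "q 0 = 0" by (rule sublin_0)
    fix r assume r: "sublin r" "\<forall>x. r x \<le> q x"
    then have "r \<in> S" using q unfolding S_def by (auto intro: order_trans)
    moreover have "M \<subseteq> epi_of r" using q(2) r(2) by (simp add: epi_of_subset)
    moreover have "epi_of r \<in> A" unfolding A_def using \<open>r \<in> S\<close> by blast
    ultimately have "epi_of r = epi_of q" using M(2) q(2) by blast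
    then have "\<forall>x. q x \<le> r x" using epi_of_subset by blast
    then show "r = q" using r by (intro ext antisym) auto
  qed
  then show ?thesis using q unfolding S_def by auto
qed


lemma separation_norm:
  fixes K :: "'v::real_normed_vector set"
  assumes cK: "convex K" and rho: "\<rho> > 0" and nK: "\<forall>k\<in>K. \<rho> \<le> norm k"
  shows "\<exists>f. bounded_linear f \<and> (\<forall>k\<in>K. \<rho> \<le> f k)"
proof (cases "K = {}")
  case True
  then show ?thesis by (intro exI[of _ "\<lambda>_. 0"]) auto
next
  case False
  then obtain k0 where k0: "k0 \<in> K" by blast
  define F where "F v = (\<lambda>(l::real, k::'v). norm (v + l *\<^sub>R k) - l * \<rho>)" for v
  define p where "p v = (INF lk\<in>{0..} \<times> K. F v lk)" for v
  have lbF: "- norm v \<le> F v (l, k)" if "l \<ge> 0" "k \<in> K" for v l k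
  proof -
    have "l * \<rho> \<le> l * norm k" using nK that by (simp add: mult_left_mono)
    also have "\<dots> = norm (l *\<^sub>R k)" using that by simp
    also have "\<dots> = norm ((v + l *\<^sub>R k) - v)" by simp
    also have "\<dots> \<le> norm (v + l *\<^sub>R k) + norm v" by (rule norm_triangle_ineq4)
    finally show ?thesis unfolding F_def by simp
  qed
  have bdd: "bdd_below (F v ` ({0..} \<times> K))" for v
    using lbF by (auto intro!: bdd_belowI2[where m="- norm v"])
  have ple: "p v \<le> norm (v + l *\<^sub>R k) - l * \<rho>" if "l \<ge> 0" "k \<in> K" for v l k
  proof -
    have "p v \<le> F v (l, k)" unfolding p_def using bdd that by (intro cINF_lower) auto
    then show ?thesis unfolding F_def by simp
  qed
  have pge: "c \<le> p v" if "\<And>l k. l \<ge> 0 \<Longrightarrow> k \<in> K \<Longrightarrow> c \<le> norm (v + l *\<^sub>R k) - l * \<rho>" for c v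
    unfolding p_def using that k0 by (intro cINF_greatest) (auto simp: F_def)
  have "sublin p"
    unfolding sublin_def
  proof (intro conjI allI impI)
    fix x y
    have key: "p (x + y) \<le> (norm (x + l1 *\<^sub>R k1) - l1 * \<rho>) + (norm (y + l2 *\<^sub>R k2) - l2 * \<rho>)"
      if "l1 \<ge> 0" "k1 \<in> K" "l2 \<ge> 0" "k2 \<in> K" for l1 k1 l2 k2
    proof (cases "l1 + l2 = 0")
      case True
      then have "l1 = 0" "l2 = 0" using that by auto
      then show ?thesis using ple[of 0 k0 "x + y"] k0 norm_triangle_ineq[of x y] by simp
    next
      case False
      define L where "L = l1 + l2"
      have L: "L > 0" using False that unfolding L_def by simp
      define k where "k = (l1 / L) *\<^sub>R k1 + (l2 / L) *\<^sub>R k2"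
      have "k \<in> K" unfolding k_def using cK that L
        unfolding convex_def by (auto simp: L_def add_divide_distrib[symmetric])
      have Lk: "L *\<^sub>R k = l1 *\<^sub>R k1 + l2 *\<^sub>R k2" unfolding k_def using L by (simp add: scaleR_add_right)
      have "p (x + y) \<le> norm (x + y + L *\<^sub>R k) - L * \<rho>" using ple \<open>k \<in> K\<close> L by simp
      also have "x + y + L *\<^sub>R k = (x + l1 *\<^sub>R k1) + (y + l2 *\<^sub>R k2)" using Lk by (simp add: algebra_simps)
      also have "norm \<dots> \<le> norm (x + l1 *\<^sub>R k1) + norm (y + l2 *\<^sub>R k2)" by (rule norm_triangle_ineq)
      finally show ?thesis unfolding L_def by (simp add: algebra_simps)
    qed
    have "p (x + y) - (norm (y + l2 *\<^sub>R k2) - l2 * \<rho>) \<le> p x" if "l2 \<ge> 0" "k2 \<in> K" for l2 k2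
    proof (rule pge)
      fix l k assume "(l::real) \<ge> 0" "k \<in> K"
      from key[OF this that] show "p (x + y) - (norm (y + l2 *\<^sub>R k2) - l2 * \<rho>) \<le> norm (x + l *\<^sub>R k) - l * \<rho>"
        by simp
    qed
    then have "p (x + y) - p x \<le> p y" by (intro pge) (auto simp: algebra_simps)
    then show "p (x + y) \<le> p x + p y" by simp
  next
    fix c :: real and x assume c: "c > 0"
    have "p (c *\<^sub>R x) / c \<le> p x"
    proof (rule pge)
      fix l k assume lk: "(l::real) \<ge> 0" "k \<in> K"
      have "p (c *\<^sub>R x) \<le> norm (c *\<^sub>R x + (c * l) *\<^sub>R k) - (c * l) * \<rho>"
        using ple lk c by simp
      also have "c *\<^sub>R x + (c * l) *\<^sub>R k = c *\<^sub>R (x + l *\<^sub>R k)" by (simp add: algebra_simps)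
      also have "norm \<dots> = c * norm (x + l *\<^sub>R k)" using c by simp
      finally show "p (c *\<^sub>R x) / c \<le> norm (x + l *\<^sub>R k) - l * \<rho>"
        using c by (simp add: field_simps)
    qed
    then show "p (c *\<^sub>R x) \<le> c * p x" using c by (simp add: field_simps)
  qed
  from hahn_banach[OF this] obtain f where f: "linear f" "\<forall>x. f x \<le> p x" by blast
  have fn: "f v \<le> norm v" for v using f(2)[rule_format, of v] ple[of 0 k0 v] k0 by simp
  have "bounded_linear f"
  proof (rule bounded_linear_intro[where K=1])
    show "f (x + y) = f x + f y" for x y using f(1) by (simp add: linear_add)
    show "f (r *\<^sub>R x) = r *\<^sub>R f x" for r x using f(1) by (simp add: linear_scale)
    show "norm (f x) \<le> norm x * 1" for x
      using fn[of x] fn[of "- x"] f(1) by (simp add: linear_neg abs_le_iff)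
  qed
  moreover have "\<rho> \<le> f k" if "k \<in> K" for k
  proof -
    have "f (- k) \<le> norm (- k + 1 *\<^sub>R k) - 1 * \<rho>" using f(2)[rule_format, of "- k"] ple[of 1 k "- k"] that by simp
    then show ?thesis using f(1) by (simp add: linear_neg)
  qed
  ultimately show ?thesis by blast
qed


lemma affine_minorant:
  fixes g :: "'z::real_normed_vector \<Rightarrow> ereal" and L :: "'s::real_normed_vector \<Rightarrow> 'z"
    and \<phi> :: "'s \<Rightarrow> real"
  assumes cg: "convex_efun g" and gfin: "\<forall>z. g z \<noteq> - \<infinity>"
    and L: "linear L" and phi: "linear \<phi>" and eps: "\<epsilon> \<ge> 0"
    and w: "g w \<noteq> \<infinity>" and rho: "\<rho> > 0"
    and far: "\<And>z t s. norm (z - w) < \<rho> \<Longrightarrow> \<bar>t - r\<bar> < \<rho> \<Longrightarrow>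
                 g (z - L s) \<le> ereal (t - \<phi> s - \<epsilon> * norm s) \<Longrightarrow> False"
  shows "\<exists>\<psi> \<beta>. bounded_linear \<psi> \<and> (\<forall>z s. ereal (\<psi> z + \<beta> - \<phi> s - \<epsilon> * norm s) \<le> g (z - L s))"
proof -
  define E where "E = {(z, t::real). \<exists>s. g (z - L s) \<le> ereal (t - \<phi> s - \<epsilon> * norm s)}"
  have memE: "(z, t) \<in> E" if "g (z - L s) \<le> ereal (t - \<phi> s - \<epsilon> * norm s)" for z t s
  proof -
    have "\<exists>s. g (z - L s) \<le> ereal (t - \<phi> s - \<epsilon> * norm s)" using that by blast
    then show ?thesis unfolding E_def by simp
  qed
  have cepi: "convex {(z, t::real). g z \<le> ereal t}" using cg unfolding convex_efun_def .
  have "convex E"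
    unfolding convex_def
  proof (intro ballI allI impI)
    fix e1 e2 and u v :: real
    assume e1: "e1 \<in> E" and e2: "e2 \<in> E" and uv: "0 \<le> u" "0 \<le> v" "u + v = 1"
    obtain z1 t1 s1 where e1d: "e1 = (z1, t1)" and s1: "g (z1 - L s1) \<le> ereal (t1 - \<phi> s1 - \<epsilon> * norm s1)"
      using e1 unfolding E_def by auto
    obtain z2 t2 s2 where e2d: "e2 = (z2, t2)" and s2: "g (z2 - L s2) \<le> ereal (t2 - \<phi> s2 - \<epsilon> * norm s2)"
      using e2 unfolding E_def by auto
    have "u *\<^sub>R (z1 - L s1, t1 - \<phi> s1 - \<epsilon> * norm s1) + v *\<^sub>R (z2 - L s2, t2 - \<phi> s2 - \<epsilon> * norm s2)
          \<in> {(z, t::real). g z \<le> ereal t}"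
      using cepi s1 s2 uv unfolding convex_def
      by (intro cepi[unfolded convex_def, rule_format]) auto
    then have A: "g (u *\<^sub>R (z1 - L s1) + v *\<^sub>R (z2 - L s2))
        \<le> ereal (u * (t1 - \<phi> s1 - \<epsilon> * norm s1) + v * (t2 - \<phi> s2 - \<epsilon> * norm s2))" by simp
    define s where "s = u *\<^sub>R s1 + v *\<^sub>R s2"
    have Ls: "L s = u *\<^sub>R L s1 + v *\<^sub>R L s2" unfolding s_def using L by (simp add: linear_add linear_scale)
    have ps: "\<phi> s = u * \<phi> s1 + v * \<phi> s2" unfolding s_def using phi by (simp add: linear_add linear_scale)
    have ns: "norm s \<le> u * norm s1 + v * norm s2" unfolding s_def
      using norm_triangle_ineq[of "u *\<^sub>R s1" "v *\<^sub>R s2"] uv by simp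
    have "u *\<^sub>R (z1 - L s1) + v *\<^sub>R (z2 - L s2) = (u *\<^sub>R z1 + v *\<^sub>R z2) - L s"
      using Ls by (simp add: algebra_simps)
    moreover have "u * (t1 - \<phi> s1 - \<epsilon> * norm s1) + v * (t2 - \<phi> s2 - \<epsilon> * norm s2)
        \<le> (u * t1 + v * t2) - \<phi> s - \<epsilon> * norm s"
    proof -
      have "\<epsilon> * norm s \<le> \<epsilon> * (u * norm s1 + v * norm s2)" using ns eps by (rule mult_left_mono)
      then show ?thesis using ps by (simp add: algebra_simps)
    qed
    ultimately have "g ((u *\<^sub>R z1 + v *\<^sub>R z2) - L s) \<le> ereal ((u * t1 + v * t2) - \<phi> s - \<epsilon> * norm s)"
      using A by (metis (no_types) ereal_less_eq(3) order_trans)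
    then show "u *\<^sub>R e1 + v *\<^sub>R e2 \<in> E" unfolding E_def e1d e2d by auto
  qed
  define P where "P = (w, r)"
  define K where "K = (+) (- P) ` E"
  have "convex K" unfolding K_def by (rule convex_translation) fact
  moreover have "\<forall>k\<in>K. \<rho> \<le> norm k"
  proof
    fix k assume "k \<in> K"
    then obtain z t s where k: "k = - P + (z, t)" and gs: "g (z - L s) \<le> ereal (t - \<phi> s - \<epsilon> * norm s)"
      unfolding K_def E_def by auto
    have kd: "k = (z - w, t - r)" unfolding k P_def by simp
    show "\<rho> \<le> norm k"
    proof (rule ccontr)
      assume "\<not> \<rho> \<le> norm k"
      then have nk: "norm k < \<rho>" by simp
      have "norm (z - w) < \<rho>" using nk norm_fst_le[of "z - w" "t - r"] kd by simp
      moreover have "\<bar>t - r\<bar> < \<rho>" using nk norm_snd_le[of "t - r" "z - w"] kd by simp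
      ultimately show False using far gs by blast
    qed
  qed
  ultimately obtain f where f: "bounded_linear f" "\<forall>k\<in>K. \<rho> \<le> f k"
    using separation_norm[OF _ rho] by metis
  interpret f: bounded_linear f by fact
  have fE: "\<rho> \<le> f e - f P" if "e \<in> E" for e
  proof -
    have "- P + e \<in> K" unfolding K_def using that by blast
    then have "\<rho> \<le> f (- P + e)" using f(2) by blast
    also have "- P + e = e - P" by simp
    finally show ?thesis by (simp add: f.diff)
  qed
  define a where "a = f (0, 1)"
  have fdec: "f (z, t) = f (z, 0) + t * a" for z t
  proof -
    have "(z, t) = (z, 0) + t *\<^sub>R (0, 1)" by simp
    then have "f (z, t) = f (z, 0) + t *\<^sub>R f (0, 1)" by (metis f.add f.scaleR)
    then show ?thesis unfolding a_def by simp
  qed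
  have L0: "L 0 = 0" using L by (rule linear_0)
  have p0: "\<phi> 0 = 0" using phi by (rule linear_0)
  obtain gw where gw: "g w = ereal gw" using w gfin by (cases "g w") auto
  have "\<not> gw < r"
  proof
    assume "gw < r"
    then have "g (w - L 0) \<le> ereal (r - \<phi> 0 - \<epsilon> * norm (0::'s))" using gw L0 p0 by simp
    then show False using far[of w r 0] rho by simp
  qed
  moreover have "\<not> \<bar>gw - r\<bar> < \<rho>"
  proof
    assume "\<bar>gw - r\<bar> < \<rho>"
    moreover have "g (w - L 0) \<le> ereal (gw - \<phi> 0 - \<epsilon> * norm (0::'s))" using gw L0 p0 by simp
    ultimately show False using far[of w gw 0] rho by simp
  qed
  ultimately have gwr: "gw - r \<ge> \<rho>" by linarith
  have "(w, gw) \<in> E" using memE[of w 0 gw] gw L0 p0 by simp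
  then have "\<rho> \<le> f (w, gw) - f P" by (rule fE)
  then have "\<rho> \<le> (gw - r) * a" unfolding P_def using fdec[of w gw] fdec[of w r] by (simp add: algebra_simps)
  then have apos: "a > 0"
  proof -
    assume h: "\<rho> \<le> (gw - r) * a"
    show "a > 0"
    proof (rule ccontr)
      assume "\<not> a > 0"
      then have "(gw - r) * a \<le> 0" using gwr rho by (simp add: mult_nonneg_nonpos)
      then show False using h rho by simp
    qed
  qed
  define \<psi> where "\<psi> z = f (z, 0) * (- 1 / a)" for z
  define \<beta> where "\<beta> = (\<rho> + f (w, 0) + r * a) / a"
  have "bounded_linear \<psi>" unfolding \<psi>_def
    by (rule bounded_linear_compose[OF bounded_linear_mult_left])
       (rule bounded_linear_compose[OF f(1) bounded_linear_Pair[OF bounded_linear_ident bounded_linear_zero]])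
  moreover have "ereal (\<psi> z + \<beta> - \<phi> s - \<epsilon> * norm s) \<le> g (z - L s)" for z s
  proof (cases "g (z - L s)")
    case (real v)
    have "g (z - L s) \<le> ereal ((v + \<phi> s + \<epsilon> * norm s) - \<phi> s - \<epsilon> * norm s)" using real by simp
    then have "(z, v + \<phi> s + \<epsilon> * norm s) \<in> E" by (rule memE)
    then have "\<rho> \<le> f (z, v + \<phi> s + \<epsilon> * norm s) - f P" by (rule fE)
    then have H: "\<rho> \<le> f (z, 0) + (v + \<phi> s + \<epsilon> * norm s) * a - f (w, 0) - r * a"
      unfolding P_def using fdec[of z "v + \<phi> s + \<epsilon> * norm s"] fdec[of w r] by simp
    then have "\<psi> z + \<beta> - \<phi> s - \<epsilon> * norm s \<le> v"
    proof -
      have "(\<rho> + f (w, 0) + r * a - f (z, 0)) / a \<le> v + \<phi> s + \<epsilon> * norm s"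
        using apos H by (simp add: pos_divide_le_eq algebra_simps)
      moreover have "\<psi> z + \<beta> = (\<rho> + f (w, 0) + r * a - f (z, 0)) / a"
        unfolding \<psi>_def \<beta>_def using apos by (simp add: diff_divide_distrib add_divide_distrib)
      ultimately show ?thesis by simp
    qed
    then show ?thesis using real by simp
  next
    case PInf then show ?thesis by simp
  next
    case MInf then show ?thesis using gfin by simp
  qed
  ultimately show ?thesis by blast
qed



lemma ws_closure:
  fixes p :: "'b::real_normed_vector \<Rightarrow>\<^sub>L real"
  assumes H: "\<And>\<epsilon>. \<epsilon> > 0 \<Longrightarrow> \<exists>u\<in>C. \<forall>s. \<bar>blinfun_apply u s - blinfun_apply p s\<bar> \<le> \<epsilon> * norm s"
  shows "p \<in> weak_star closure_of C"
  unfolding closure_of_def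
proof (intro CollectI conjI allI impI)
  show "p \<in> topspace weak_star" unfolding weak_star_def topspace_pullback_topology by simp
  fix T assume T: "p \<in> T \<and> openin weak_star T"
  then obtain U where U: "openin (product_topology (\<lambda>_. euclideanreal) UNIV) U" "T = blinfun_apply -` U \<inter> UNIV"
    unfolding weak_star_def openin_pullback_topology by blast
  have "blinfun_apply p \<in> U" using T U by blast
  from U(1)[unfolded openin_product_topology_alt, rule_format, OF this] obtain V where V: "finite {i \<in> UNIV. V i \<noteq> topspace euclideanreal}"
      "\<forall>i\<in>UNIV. openin euclideanreal (V i)" "blinfun_apply p \<in> Pi\<^sub>E UNIV V" "Pi\<^sub>E UNIV V \<subseteq> U"
    by blast
  define F where "F = {i. V i \<noteq> UNIV}"
  have finF: "finite F" using V(1) unfolding F_def by simp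
  have pV: "blinfun_apply p i \<in> V i" for i using V(3) by (auto simp: PiE_iff)
  have ev: "\<forall>\<^sub>F \<epsilon> in at_right (0::real). \<forall>y. \<bar>y - blinfun_apply p i\<bar> \<le> \<epsilon> * norm i \<longrightarrow> y \<in> V i" for i
  proof -
    have "open (V i)" using V(2) open_openin by blast
    then obtain e where e: "e > 0" "\<And>y. dist y (blinfun_apply p i) < e \<Longrightarrow> y \<in> V i"
      using pV[of i] unfolding open_dist by blast
    show ?thesis unfolding eventually_at_right_field
    proof (intro exI[of _ "e / (norm i + 1)"] conjI allI impI)
      show "0 < e / (norm i + 1)" using e(1) norm_ge_zero[of i] by (intro divide_pos_pos) linarith+
      fix \<epsilon> y :: real assume \<epsilon>: "0 < \<epsilon>" "\<epsilon> < e / (norm i + 1)"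
        and y: "\<bar>y - blinfun_apply p i\<bar> \<le> \<epsilon> * norm i"
      have "\<epsilon> * norm i \<le> \<epsilon> * (norm i + 1)" using \<epsilon> by simp
      also have "\<dots> < e" using \<epsilon> norm_ge_zero[of i] by (simp add: pos_less_divide_eq)
      finally show "y \<in> V i" using y e(2) by (simp add: dist_real_def)
    qed
  qed
  have "\<forall>\<^sub>F \<epsilon> in at_right (0::real). 0 < \<epsilon> \<and> (\<forall>i\<in>F. \<forall>y. \<bar>y - blinfun_apply p i\<bar> \<le> \<epsilon> * norm i \<longrightarrow> y \<in> V i)"
  proof -
    have "\<forall>\<^sub>F \<epsilon> in at_right (0::real). (\<forall>i\<in>F. \<forall>y. \<bar>y - blinfun_apply p i\<bar> \<le> \<epsilon> * norm i \<longrightarrow> y \<in> V i)"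
      using ev by (intro eventually_ball_finite[OF finF]) blast
    then show ?thesis by (rule eventually_conj[OF eventually_at_right_less])
  qed
  then obtain b where b: "b > 0" "\<And>\<epsilon>. 0 < \<epsilon> \<Longrightarrow> \<epsilon> < b \<Longrightarrow>
        0 < \<epsilon> \<and> (\<forall>i\<in>F. \<forall>y. \<bar>y - blinfun_apply p i\<bar> \<le> \<epsilon> * norm i \<longrightarrow> y \<in> V i)"
    unfolding eventually_at_right_field by blast
  then have bb: "\<forall>i\<in>F. \<forall>y. \<bar>y - blinfun_apply p i\<bar> \<le> (b/2) * norm i \<longrightarrow> y \<in> V i"
    using b(2)[of "b/2"] b(1) by linarith
  obtain u where u: "u \<in> C" "\<forall>s. \<bar>blinfun_apply u s - blinfun_apply p s\<bar> \<le> (b/2) * norm s"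
    using H[of "b/2"] b(1) by auto
  have "blinfun_apply u i \<in> V i" for i
  proof (cases "i \<in> F")
    case True then show ?thesis using bb u(2) by blast
  next
    case False then show ?thesis unfolding F_def by simp
  qed
  then have "blinfun_apply u \<in> U" using V(4) by (auto simp: PiE_iff)
  then show "\<exists>y\<in>C. y \<in> T" using u(1) U(2) by blast
qed


lemma scale_le:
  fixes a b M :: real
  assumes "\<And>t. t > 0 \<Longrightarrow> t * a \<le> t * b + M"
  shows "a \<le> b"
proof (rule ccontr)
  assume "\<not> a \<le> b"
  then have ab: "a - b > 0" by simp
  define t where "t = (\<bar>M\<bar> + 1) / (a - b)"
  have t: "t > 0" unfolding t_def using ab by simp
  have "t * (a - b) = \<bar>M\<bar> + 1" unfolding t_def using ab by simp
  then have "t * a > t * b + M" by (simp add: algebra_simps)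
  then show False using assms[OF t] by simp
qed

lemma near_bound:
  fixes x0 y :: "'a::real_normed_vector" and x0s ys :: "'a \<Rightarrow>\<^sub>L real"
  assumes "norm (y - x0) < \<rho>" "norm (ys - x0s) < \<rho>" "\<rho> \<le> 1 / (2 * (norm x0s + norm x0 + 2))" "\<rho> > 0"
  shows "blinfun_apply x0s x0 - 1/2 \<le> blinfun_apply ys y"
proof -
  define N where "N = norm x0s + norm x0 + 2"
  have N: "N > 0" unfolding N_def using norm_ge_zero[of x0s] norm_ge_zero[of x0] by linarith
  have rN: "\<rho> * N \<le> 1/2" using assms(3) N unfolding N_def[symmetric] by (simp add: field_simps)
  have "\<rho> * 2 \<le> \<rho> * N" using assms(4) unfolding N_def
    using norm_ge_zero[of x0s] norm_ge_zero[of x0] by (intro mult_left_mono) auto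
  then have r1: "\<rho> \<le> 1" using rN by linarith
  have nys: "norm ys \<le> norm x0s + \<rho>" using assms(2) norm_triangle_sub[of ys x0s] by simp
  have e1: "\<bar>blinfun_apply ys (y - x0)\<bar> \<le> (norm x0s + 1) * \<rho>"
  proof -
    have "\<bar>blinfun_apply ys (y - x0)\<bar> \<le> norm ys * norm (y - x0)" using norm_blinfun[of ys "y - x0"] by simp
    also have "\<dots> \<le> (norm x0s + 1) * \<rho>"
      using nys r1 assms(1) by (intro mult_mono) auto
    finally show ?thesis .
  qed
  have e2: "\<bar>blinfun_apply (ys - x0s) x0\<bar> \<le> \<rho> * norm x0"
  proof -
    have "\<bar>blinfun_apply (ys - x0s) x0\<bar> \<le> norm (ys - x0s) * norm x0" using norm_blinfun[of "ys - x0s" x0] by simp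
    also have "\<dots> \<le> \<rho> * norm x0" using assms(2) by (intro mult_right_mono) auto
    finally show ?thesis .
  qed
  have "blinfun_apply ys y = blinfun_apply x0s x0 + blinfun_apply ys (y - x0) + blinfun_apply (ys - x0s) x0"
    by (simp add: blinfun.diff_left blinfun.diff_right)
  moreover have "(norm x0s + 1) * \<rho> + \<rho> * norm x0 \<le> 1/2" using rN assms(4) unfolding N_def by (simp add: algebra_simps)
  ultimately show ?thesis using e1 e2 by linarith
qed

lemma canon_apply: "blinfun_apply (canon x) f = blinfun_apply f x"
  unfolding canon_def by (simp add: bounded_linear_Blinfun_apply blinfun.bounded_linear_left)


lemma core1:
  fixes h :: "'a::real_normed_vector \<times> ('a \<Rightarrow>\<^sub>L real) \<Rightarrow> ereal"
  assumes cvx: "convex_efun h" and ge: "\<And>x xs. h (x, xs) \<ge> ereal (blinfun_apply xs x)"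
    and fin: "h (x0, x0s) < \<infinity>" and eps: "\<epsilon> > 0"
  shows "\<exists>u\<in>fst ` edom (conj_fitz h). \<forall>s. \<bar>blinfun_apply u s - blinfun_apply x0s s\<bar> \<le> \<epsilon> * norm s"
proof -
  have gfin: "\<forall>z. h z \<noteq> - \<infinity>"
  proof
    fix z show "h z \<noteq> - \<infinity>" using ge[where x="fst z" and xs="snd z"] by (cases z) auto
  qed
  define c0 where "c0 = blinfun_apply x0s x0"
  define \<rho> where "\<rho> = min \<epsilon> (1 / (2 * (norm x0s + norm x0 + 2)))"
  have N: "norm x0s + norm x0 + 2 > 0" using norm_ge_zero[of x0s] norm_ge_zero[of x0] by linarith
  have rho: "\<rho> > 0" unfolding \<rho>_def using eps N by simp
  have rho1: "\<rho> \<le> 1 / (2 * (norm x0s + norm x0 + 2))" "\<rho> \<le> \<epsilon>" unfolding \<rho>_def by auto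
  have rho4: "\<rho> \<le> 1/4"
  proof -
    have "1 / (2 * (norm x0s + norm x0 + 2)) \<le> 1 / (2 * 2)"
      using N by (intro divide_left_mono) auto
    then show ?thesis using rho1 by simp
  qed
  have Llin: "linear (\<lambda>s::'a. (s, 0::'a \<Rightarrow>\<^sub>L real))"
    using bounded_linear_Pair[OF bounded_linear_ident bounded_linear_zero] bounded_linear.linear by blast
  have plin: "linear (blinfun_apply x0s)"
    using blinfun.bounded_linear_right bounded_linear.linear by blast
  have "\<exists>\<psi> \<beta>. bounded_linear \<psi> \<and> (\<forall>z s. ereal (\<psi> z + \<beta> - blinfun_apply x0s s - \<epsilon> * norm s) \<le> h (z - (s, 0)))"
  proof (rule affine_minorant[OF cvx gfin Llin plin _ _ rho, where w="(x0, x0s)" and r="c0 - 1"])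
    show "0 \<le> \<epsilon>" using eps by simp
    show "h (x0, x0s) \<noteq> \<infinity>" using fin by simp
    fix z t s
    assume nz: "norm (z - (x0, x0s)) < \<rho>" and nt: "\<bar>t - (c0 - 1)\<bar> < \<rho>"
      and hz: "h (z - (s, 0)) \<le> ereal (t - blinfun_apply x0s s - \<epsilon> * norm s)"
    obtain y ys where z: "z = (y, ys)" by (cases z)
    have ny: "norm (y - x0) < \<rho>" using nz norm_fst_le[of "y - x0" "ys - x0s"] z by simp
    have nys: "norm (ys - x0s) < \<rho>" using nz norm_snd_le[of "ys - x0s" "y - x0"] z by simp
    have "ereal (blinfun_apply ys (y - s)) \<le> h (y - s, ys)" by (rule ge)
    also have "(y - s, ys) = z - (s, 0)" using z by simp
    finally have "ereal (blinfun_apply ys (y - s)) \<le> h (z - (s, 0))" .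
    then have "ereal (blinfun_apply ys (y - s)) \<le> ereal (t - blinfun_apply x0s s - \<epsilon> * norm s)"
      using hz by (rule order_trans)
    then have "blinfun_apply ys (y - s) \<le> t - blinfun_apply x0s s - \<epsilon> * norm s" by (simp only: ereal_less_eq(3))
    then have A: "blinfun_apply ys y \<le> t + blinfun_apply (ys - x0s) s - \<epsilon> * norm s"
      by (simp add: blinfun.diff_left blinfun.diff_right)
    have "blinfun_apply (ys - x0s) s \<le> norm (ys - x0s) * norm s"
      using norm_blinfun[of "ys - x0s" s] by simp
    also have "\<dots> \<le> \<epsilon> * norm s" using nys rho1 by (intro mult_right_mono) auto
    finally have "blinfun_apply ys y \<le> t" using A by simp
    moreover have "c0 - 1/2 \<le> blinfun_apply ys y" unfolding c0_def using near_bound[OF ny nys rho1(1) rho] .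
    ultimately show False using nt rho4 by linarith
  qed
  then obtain \<psi> \<beta> where psi: "bounded_linear \<psi>"
    and mino: "\<And>z s. ereal (\<psi> z + \<beta> - blinfun_apply x0s s - \<epsilon> * norm s) \<le> h (z - (s, 0))" by blast
  have b1: "bounded_linear (\<lambda>y::'a. \<psi> (y, 0))"
    by (rule bounded_linear_compose[OF psi bounded_linear_Pair[OF bounded_linear_ident bounded_linear_zero]])
  have b2: "bounded_linear (\<lambda>ys::'a \<Rightarrow>\<^sub>L real. \<psi> (0, ys))"
    by (rule bounded_linear_compose[OF psi bounded_linear_Pair[OF bounded_linear_zero bounded_linear_ident]])
  define u where "u = Blinfun (\<lambda>y::'a. \<psi> (y, 0))"
  define v where "v = Blinfun (\<lambda>ys::'a \<Rightarrow>\<^sub>L real. \<psi> (0, ys))"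
  have uapp: "blinfun_apply u y = \<psi> (y, 0)" for y unfolding u_def using b1 by (simp add: bounded_linear_Blinfun_apply)
  have vapp: "blinfun_apply v ys = \<psi> (0, ys)" for ys unfolding v_def using b2 by (simp add: bounded_linear_Blinfun_apply)
  have psidec: "\<psi> (y, ys) = blinfun_apply u y + blinfun_apply v ys" for y ys
  proof -
    have "(y, ys) = (y, 0) + (0, ys)" by simp
    then have "\<psi> (y, ys) = \<psi> (y, 0) + \<psi> (0, ys)" by (metis psi bounded_linear.linear linear_add)
    then show ?thesis using uapp vapp by simp
  qed
  have "conj_fitz h (u, v) \<le> ereal (- \<beta>)"
    unfolding conj_fitz_def
  proof (simp only: prod.case, rule SUP_least)
    fix p :: "'a \<times> ('a \<Rightarrow>\<^sub>L real)"
    obtain y ys where p: "p = (y, ys)" by (cases p)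
    have "ereal (\<psi> p + \<beta> - blinfun_apply x0s 0 - \<epsilon> * norm (0::'a)) \<le> h (p - (0, 0))" by (rule mino)
    then have m: "ereal (blinfun_apply u y + blinfun_apply v ys + \<beta>) \<le> h p" using p psidec by simp
    show "ereal (blinfun_apply u (fst p) + blinfun_apply v (snd p)) - h p \<le> ereal (- \<beta>)"
    proof (cases "h p")
      case (real r) then show ?thesis using m p by simp
    next
      case PInf then show ?thesis by simp
    next
      case MInf then show ?thesis using gfin by simp
    qed
  qed
  then have "u \<in> fst ` edom (conj_fitz h)" unfolding edom_def
    by (intro image_eqI[of _ _ "(u, v)"]) auto
  moreover have "\<bar>blinfun_apply u s - blinfun_apply x0s s\<bar> \<le> \<epsilon> * norm s" for s
  proof -
    obtain hr where hr: "h (x0, x0s) = ereal hr" using fin gfin by (cases "h (x0, x0s)") auto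
    define M where "M = hr - blinfun_apply u x0 - blinfun_apply v x0s - \<beta>"
    have key: "blinfun_apply u s' - blinfun_apply x0s s' \<le> \<epsilon> * norm s' + M" for s'
    proof -
      have "ereal (\<psi> (x0 + s', x0s) + \<beta> - blinfun_apply x0s s' - \<epsilon> * norm s') \<le> h ((x0 + s', x0s) - (s', 0))"
        by (rule mino)
      then have "\<psi> (x0 + s', x0s) + \<beta> - blinfun_apply x0s s' - \<epsilon> * norm s' \<le> hr" using hr by simp
      then show ?thesis unfolding M_def using psidec[of "x0 + s'" x0s] by (simp add: blinfun.add_right)
    qed
    have "blinfun_apply u s - blinfun_apply x0s s \<le> \<epsilon> * norm s" for s
    proof (rule scale_le[where M=M])
      fix t :: real assume t: "t > 0"
      show "t * (blinfun_apply u s - blinfun_apply x0s s) \<le> t * (\<epsilon> * norm s) + M"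
        using key[of "t *\<^sub>R s"] t by (simp add: blinfun.scaleR_right algebra_simps)
    qed
    from this[of s] this[of "- s"] show ?thesis by (simp add: blinfun.minus_right abs_le_iff)
  qed
  ultimately show ?thesis by blast
qed

lemma core2:
  fixes h :: "'a::real_normed_vector \<times> ('a \<Rightarrow>\<^sub>L real) \<Rightarrow> ereal"
  assumes cvx: "convex_efun h" and ge: "\<And>x xs. h (x, xs) \<ge> ereal (blinfun_apply xs x)"
    and fin: "h (x0, x0s) < \<infinity>" and eps: "\<epsilon> > 0"
  shows "\<exists>u\<in>snd ` edom (conj_fitz h). \<forall>s. \<bar>blinfun_apply u s - blinfun_apply (canon x0) s\<bar> \<le> \<epsilon> * norm s"
proof -
  have gfin: "\<forall>z. h z \<noteq> - \<infinity>"
  proof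
    fix z show "h z \<noteq> - \<infinity>" using ge[where x="fst z" and xs="snd z"] by (cases z) auto
  qed
  define c0 where "c0 = blinfun_apply x0s x0"
  define \<rho> where "\<rho> = min \<epsilon> (1 / (2 * (norm x0s + norm x0 + 2)))"
  have N: "norm x0s + norm x0 + 2 > 0" using norm_ge_zero[of x0s] norm_ge_zero[of x0] by linarith
  have rho: "\<rho> > 0" unfolding \<rho>_def using eps N by simp
  have rho1: "\<rho> \<le> 1 / (2 * (norm x0s + norm x0 + 2))" "\<rho> \<le> \<epsilon>" unfolding \<rho>_def by auto
  have rho4: "\<rho> \<le> 1/4"
  proof -
    have "1 / (2 * (norm x0s + norm x0 + 2)) \<le> 1 / (2 * 2)"
      using N by (intro divide_left_mono) auto
    then show ?thesis using rho1 by simp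
  qed
  have Llin: "linear (\<lambda>s::'a \<Rightarrow>\<^sub>L real. (0::'a, s))"
    using bounded_linear_Pair[OF bounded_linear_zero bounded_linear_ident] bounded_linear.linear by blast
  have plin: "linear (\<lambda>s::'a \<Rightarrow>\<^sub>L real. blinfun_apply s x0)"
    using blinfun.bounded_linear_left bounded_linear.linear by blast
  have "\<exists>\<psi> \<beta>. bounded_linear \<psi> \<and> (\<forall>z s. ereal (\<psi> z + \<beta> - blinfun_apply s x0 - \<epsilon> * norm s) \<le> h (z - (0, s)))"
  proof (rule affine_minorant[OF cvx gfin Llin plin _ _ rho, where w="(x0, x0s)" and r="c0 - 1"])
    show "0 \<le> \<epsilon>" using eps by simp
    show "h (x0, x0s) \<noteq> \<infinity>" using fin by simp
    fix z t s
    assume nz: "norm (z - (x0, x0s)) < \<rho>" and nt: "\<bar>t - (c0 - 1)\<bar> < \<rho>"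
      and hz: "h (z - (0, s)) \<le> ereal (t - blinfun_apply s x0 - \<epsilon> * norm s)"
    obtain y ys where z: "z = (y, ys)" by (cases z)
    have ny: "norm (y - x0) < \<rho>" using nz norm_fst_le[of "y - x0" "ys - x0s"] z by simp
    have nys: "norm (ys - x0s) < \<rho>" using nz norm_snd_le[of "ys - x0s" "y - x0"] z by simp
    have "ereal (blinfun_apply (ys - s) y) \<le> h (y, ys - s)" by (rule ge)
    also have "(y, ys - s) = z - (0, s)" using z by simp
    finally have "ereal (blinfun_apply (ys - s) y) \<le> h (z - (0, s))" .
    then have "ereal (blinfun_apply (ys - s) y) \<le> ereal (t - blinfun_apply s x0 - \<epsilon> * norm s)"
      using hz by (rule order_trans)
    then have "blinfun_apply (ys - s) y \<le> t - blinfun_apply s x0 - \<epsilon> * norm s" by (simp only: ereal_less_eq(3))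
    then have A: "blinfun_apply ys y \<le> t + blinfun_apply s (y - x0) - \<epsilon> * norm s"
      by (simp add: blinfun.diff_left blinfun.diff_right)
    have "blinfun_apply s (y - x0) \<le> norm s * norm (y - x0)"
      using norm_blinfun[of s "y - x0"] by simp
    also have "\<dots> \<le> norm s * \<epsilon>" using ny rho1 by (intro mult_left_mono) auto
    also have "\<dots> = \<epsilon> * norm s" by simp
    finally have "blinfun_apply ys y \<le> t" using A by simp
    moreover have "c0 - 1/2 \<le> blinfun_apply ys y" unfolding c0_def using near_bound[OF ny nys rho1(1) rho] .
    ultimately show False using nt rho4 by linarith
  qed
  then obtain \<psi> \<beta> where psi: "bounded_linear \<psi>"
    and mino: "\<And>z s. ereal (\<psi> z + \<beta> - blinfun_apply s x0 - \<epsilon> * norm s) \<le> h (z - (0, s))" by blast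
  have b1: "bounded_linear (\<lambda>y::'a. \<psi> (y, 0))"
    by (rule bounded_linear_compose[OF psi bounded_linear_Pair[OF bounded_linear_ident bounded_linear_zero]])
  have b2: "bounded_linear (\<lambda>ys::'a \<Rightarrow>\<^sub>L real. \<psi> (0, ys))"
    by (rule bounded_linear_compose[OF psi bounded_linear_Pair[OF bounded_linear_zero bounded_linear_ident]])
  define u where "u = Blinfun (\<lambda>y::'a. \<psi> (y, 0))"
  define v where "v = Blinfun (\<lambda>ys::'a \<Rightarrow>\<^sub>L real. \<psi> (0, ys))"
  have uapp: "blinfun_apply u y = \<psi> (y, 0)" for y unfolding u_def using b1 by (simp add: bounded_linear_Blinfun_apply)
  have vapp: "blinfun_apply v ys = \<psi> (0, ys)" for ys unfolding v_def using b2 by (simp add: bounded_linear_Blinfun_apply)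
  have psidec: "\<psi> (y, ys) = blinfun_apply u y + blinfun_apply v ys" for y ys
  proof -
    have "(y, ys) = (y, 0) + (0, ys)" by simp
    then have "\<psi> (y, ys) = \<psi> (y, 0) + \<psi> (0, ys)" by (metis psi bounded_linear.linear linear_add)
    then show ?thesis using uapp vapp by simp
  qed
  have "conj_fitz h (u, v) \<le> ereal (- \<beta>)"
    unfolding conj_fitz_def
  proof (simp only: prod.case, rule SUP_least)
    fix p :: "'a \<times> ('a \<Rightarrow>\<^sub>L real)"
    obtain y ys where p: "p = (y, ys)" by (cases p)
    have "ereal (\<psi> p + \<beta> - blinfun_apply 0 x0 - \<epsilon> * norm (0::'a \<Rightarrow>\<^sub>L real)) \<le> h (p - (0, 0))" by (rule mino)
    then have m: "ereal (blinfun_apply u y + blinfun_apply v ys + \<beta>) \<le> h p" using p psidec by simp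
    show "ereal (blinfun_apply u (fst p) + blinfun_apply v (snd p)) - h p \<le> ereal (- \<beta>)"
    proof (cases "h p")
      case (real r) then show ?thesis using m p by simp
    next
      case PInf then show ?thesis by simp
    next
      case MInf then show ?thesis using gfin by simp
    qed
  qed
  then have "v \<in> snd ` edom (conj_fitz h)" unfolding edom_def
    by (intro image_eqI[of _ _ "(u, v)"]) auto
  moreover have "\<bar>blinfun_apply v s - blinfun_apply (canon x0) s\<bar> \<le> \<epsilon> * norm s" for s
  proof -
    obtain hr where hr: "h (x0, x0s) = ereal hr" using fin gfin by (cases "h (x0, x0s)") auto
    define M where "M = hr - blinfun_apply u x0 - blinfun_apply v x0s - \<beta>"
    have key: "blinfun_apply v s' - blinfun_apply s' x0 \<le> \<epsilon> * norm s' + M" for s'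
    proof -
      have "ereal (\<psi> (x0, x0s + s') + \<beta> - blinfun_apply s' x0 - \<epsilon> * norm s') \<le> h ((x0, x0s + s') - (0, s'))"
        by (rule mino)
      then have "\<psi> (x0, x0s + s') + \<beta> - blinfun_apply s' x0 - \<epsilon> * norm s' \<le> hr" using hr by simp
      then show ?thesis unfolding M_def using psidec[of x0 "x0s + s'"] by (simp add: blinfun.add_right)
    qed
    have "blinfun_apply v s - blinfun_apply s x0 \<le> \<epsilon> * norm s" for s
    proof (rule scale_le[where M=M])
      fix t :: real assume t: "t > 0"
      show "t * (blinfun_apply v s - blinfun_apply s x0) \<le> t * (\<epsilon> * norm s) + M"
        using key[of "t *\<^sub>R s"] t by (simp add: blinfun.scaleR_right blinfun.scaleR_left algebra_simps)
    qed
    from this[of s] this[of "- s"] show ?thesis by (simp add: canon_apply blinfun.minus_right blinfun.minus_left abs_le_iff)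
  qed
  ultimately show ?thesis by blast
qed


theorem lemma3p3:
  fixes h :: "'a::banach \<times> ('a \<Rightarrow>\<^sub>L real) \<Rightarrow> ereal"
  assumes "convex_efun h"
    and "\<And>x xs. h (x, xs) \<ge> ereal (blinfun_apply xs x)"
  shows "snd ` edom h \<subseteq> weak_star closure_of (fst ` edom (conj_fitz h)) \<and>
         canon ` fst ` edom h \<subseteq> weak_star closure_of (snd ` edom (conj_fitz h))"
proof (intro conjI subsetI)
  fix x assume "x \<in> snd ` edom h"
  then obtain x0 where fin: "h (x0, x) < \<infinity>" unfolding edom_def by force
  show "x \<in> weak_star closure_of (fst ` edom (conj_fitz h))"
    by (rule ws_closure) (use core1[OF assms fin] in blast)
next
  fix y assume "y \<in> canon ` fst ` edom h"
  then obtain x0 xs where y: "y = canon x0" and fin: "h (x0, xs) < \<infinity>" unfolding edom_def by force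
  show "y \<in> weak_star closure_of (snd ` edom (conj_fitz h))"
    unfolding y by (rule ws_closure) (use core2[OF assms fin] in blast)
qed

end
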